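(* Let $O=(o_{i,j})_{i,j=1}^k$ be a real $k\times k$ matrix, let $\alpha_{i,j}=o_{i,j}-o_{k,j}$ for $i=1,\ldots,k-1$, $j=1,\ldots,k$, and let $A$ be the $k\times k$ matrix whose first $k-1$ rows are $(\alpha_{i,1},\ldots,\alpha_{i,k})$, $i=1,\ldots,k-1$, and whose last row is $(1,\ldots,1)$. Suppose $A$ is invertible and let $\Lambda=(\Lambda_{i,j})=A^{-1}$. Assume (i) $o_{ii}>o_{ji}\ge 0$ for all $i\ne j$; (ii) $\Lambda_{i,k}>0$ for all $i=1,\ldots,k$; (iii) $\sum_{j=1}^k o_{i,j}\Lambda_{j,k}>1$ for all $i=1,\ldots,k-1$. Then $\mathbf{f}^D=(f^D_1,\ldots,f^D_k)$ with $f^D_j=\Lambda_{j,k}$ is a Dutch book solution, and for every $\mathbf{p}$ in the simplex and every $i$, $$G(\mathbf{f}^D)=\prod_{l=1}^k\Big(\sum_{j=1}^k o_{l,j}f^D_j\Big)^{p_l}=\sum_{j=1}^k o_{i,j}\Lambda_{j,k}.$$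
   Context: $\Delta_{k-1}=\{\mathbf{x}\in[0,1]^k: x_1+\cdots+x_k=1\}$. For $\mathbf{f}\in\Delta_{k-1}$, $\overline{o}_i(\mathbf{f})=\sum_{j=1}^k o_{i,j}f_j$, and for $\mathbf{p}\in\Delta_{k-1}$, $G(\mathbf{f})=\prod_{i=1}^k\overline{o}_i(\mathbf{f})^{p_i}$. A Dutch book solution is an $\mathbf{f}\in\Delta_{k-1}$ with $\overline{o}_1(\mathbf{f})=\overline{o}_2(\mathbf{f})=\cdots=\overline{o}_k(\mathbf{f})>1$. *)

theory Defs
  imports "HOL-Analysis.Analysis"
begin

(* Matrices and vectors are indexed by {1..k}, represented as functions on nat. *)

definition prob_simplex :: "nat \<Rightarrow> (nat \<Rightarrow> real) set" where
  "prob_simplex k = {x. (\<forall>j\<in>{1..k}. 0 \<le> x j \<and> x j \<le> 1) \<and> (\<Sum>j=1..k. x j) = 1}"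

definition obar :: "nat \<Rightarrow> (nat \<Rightarrow> nat \<Rightarrow> real) \<Rightarrow> (nat \<Rightarrow> real) \<Rightarrow> nat \<Rightarrow> real" where
  "obar k o' f i = (\<Sum>j=1..k. o' i j * f j)"

definition G :: "nat \<Rightarrow> (nat \<Rightarrow> nat \<Rightarrow> real) \<Rightarrow> (nat \<Rightarrow> real) \<Rightarrow> (nat \<Rightarrow> real) \<Rightarrow> real" where
  "G k o' p f = (\<Prod>i=1..k. obar k o' f i powr p i)"

definition dutch_book_solution :: "nat \<Rightarrow> (nat \<Rightarrow> nat \<Rightarrow> real) \<Rightarrow> (nat \<Rightarrow> real) \<Rightarrow> bool" where
  "dutch_book_solution k o' f \<longleftrightarrow> f \<in> prob_simplex k \<and>
     (\<forall>i\<in>{1..k}. obar k o' f i = obar k o' f 1) \<and> obar k o' f 1 > 1"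

definition Amat :: "nat \<Rightarrow> (nat \<Rightarrow> nat \<Rightarrow> real) \<Rightarrow> nat \<Rightarrow> nat \<Rightarrow> real" where
  "Amat k o' i j = (if i = k then 1 else o' i j - o' k j)"

definition is_inverse :: "nat \<Rightarrow> (nat \<Rightarrow> nat \<Rightarrow> real) \<Rightarrow> (nat \<Rightarrow> nat \<Rightarrow> real) \<Rightarrow> bool" where
  "is_inverse k M L \<longleftrightarrow>
     (\<forall>i\<in>{1..k}. \<forall>j\<in>{1..k}. (\<Sum>l=1..k. M i l * L l j) = (if i = j then 1 else 0)) \<and>
     (\<forall>i\<in>{1..k}. \<forall>j\<in>{1..k}. (\<Sum>l=1..k. L i l * M l j) = (if i = j then 1 else 0))"

end

theory Submission
  imports Defs
begin

theorem lemma1: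
  fixes k :: nat and o' \<Lambda> :: "nat \<Rightarrow> nat \<Rightarrow> real"
  assumes k2: "k \<ge> 2"
    and inv: "is_inverse k (Amat k o') \<Lambda>"
    and i: "\<forall>i\<in>{1..k}. \<forall>j\<in>{1..k}. i \<noteq> j \<longrightarrow> o' i i > o' j i \<and> o' j i \<ge> 0"
    and ii: "\<forall>i\<in>{1..k}. \<Lambda> i k > 0"
    and iii: "\<forall>i\<in>{1..k-1}. (\<Sum>j=1..k. o' i j * \<Lambda> j k) > 1"
  shows "dutch_book_solution k o' (\<lambda>j. \<Lambda> j k) \<and>
         (\<forall>p\<in>prob_simplex k. \<forall>i\<in>{1..k}.
            G k o' p (\<lambda>j. \<Lambda> j k) = (\<Sum>j=1..k. o' i j * \<Lambda> j k))"
proof -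
  let ?f = "\<lambda>j. \<Lambda> j k"
  have kk: "k \<in> {1..k}" using k2 by auto
  have row: "\<And>i. i \<in> {1..k} \<Longrightarrow> (\<Sum>l=1..k. Amat k o' i l * \<Lambda> l k) = (if i = k then 1 else 0)"
    using inv kk unfolding is_inverse_def by blast
  have s1: "(\<Sum>l=1..k. \<Lambda> l k) = 1" using row[OF kk] by (simp add: Amat_def)
  have eqk: "obar k o' ?f i = obar k o' ?f k" if "i \<in> {1..k}" for i
  proof (cases "i = k")
    case False
    have "(\<Sum>l=1..k. (o' i l - o' k l) * \<Lambda> l k) = 0" using row[OF that] False by (simp add: Amat_def)
    thus ?thesis unfolding obar_def by (simp add: left_diff_distrib sum_subtractf)
  qed simp
  have one: "1 \<in> {1..k}" using k2 by auto
  have eq: "obar k o' ?f i = obar k o' ?f 1" if "i \<in> {1..k}" for i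
    using eqk[OF that] eqk[OF one] by linarith
  have one': "1 \<in> {1..k-1}" using k2 by auto
  have gt: "obar k o' ?f 1 > 1" using bspec[OF iii one'] unfolding obar_def by simp
  have le1: "\<Lambda> j k \<le> 1" if "j \<in> {1..k}" for j
  proof -
    have "\<Lambda> j k \<le> (\<Sum>l=1..k. \<Lambda> l k)"
      proof (rule member_le_sum)
      show "\<And>x. x \<in> {1..k} - {j} \<Longrightarrow> 0 \<le> \<Lambda> x k" using ii by (simp add: less_imp_le)
    qed (use that in simp_all)
    thus ?thesis using s1 by simp
  qed
  have nn: "\<forall>j\<in>{1..k}. 0 \<le> \<Lambda> j k \<and> \<Lambda> j k \<le> 1" using ii le1 by (simp add: less_imp_le)
  have sx: "?f \<in> prob_simplex k" unfolding prob_simplex_def using nn s1 by simp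
  have dbs: "dutch_book_solution k o' ?f" unfolding dutch_book_solution_def using sx eq gt by blast
  have G: "G k o' p ?f = (\<Sum>j=1..k. o' i j * \<Lambda> j k)" if p: "p \<in> prob_simplex k" and iI: "i \<in> {1..k}" for p i
  proof -
    let ?c = "obar k o' ?f 1"
    have "G k o' p ?f = (\<Prod>l=1..k. ?c powr p l)"
      unfolding G_def
    proof (rule prod.cong)
      fix x assume "x \<in> {1..k}"
      from eq[OF this] show "obar k o' ?f x powr p x = ?c powr p x" by (rule arg_cong)
    qed (rule refl)
    also have "\<dots> = ?c powr (\<Sum>l=1..k. p l)" using gt by (intro powr_sum[symmetric]) simp
    also have "\<dots> = ?c" using p gt unfolding prob_simplex_def by simp
    also have "\<dots> = obar k o' ?f i" using eq[OF iI] by simp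
    finally show ?thesis unfolding obar_def .
  qed
  show ?thesis using dbs G by blast
qed

end
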